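(* Let $(\mu,u)$ be a classical structure on $A$ with spiders $\Xi_n^m$ and let $H$ be a complementary endomorphism for it. Then $$(\Xi_3^1\otimes 1_A)\circ(1_A\otimes H\otimes H\otimes 1_A)\circ(1_A\otimes\Xi_1^3)=1_{A\otimes A}.$$
   Context: Setting. $\mathbf C^{pure}$ is a strict symmetric monoidal category with monoidal unit $\mathrm I$, symmetry $\sigma$ and a dagger functor $(-)^\dagger$ (identity on objects, contravariant, involutive, strict monoidal), in which every object $A$ is self-dual: there is $\eta_A:\mathrm I\to A\otimes A$ with $\epsilon_A:=\eta_A^\dagger$, $(\epsilon_A\otimes 1_A)\circ(1_A\otimes\eta_A)=1_A$ and $\sigma_{A,A}\circ\eta_A=\eta_A$. A morphism $U$ is unitary if $U^\dagger\circ U=1$ and $U\circ U^\dagger=1$. Classical structure on $A$: morphisms $\mu:A\otimes A\to A$ and $u:\mathrm I\to A$, with $\delta:=\mu^\dagger$, such that $\mu$ is associative with unit $u$, $\mu\circ\sigma_{A,A}=\mu$, $(1_A\otimes\mu)\circ(\delta\otimes 1_A)=\delta\circ\mu$, $\mu\circ\delta=1_A$, and $\eta_A=\delta\circ u$. Spiders: $\mu_0:=u$, $\mu_1:=1_A$, $\mu_{k+1}:=\mu\circ(\mu_k\otimes 1_A)$, and $\Xi_n^m:=\mu_m^\dagger\circ\mu_n:A^{\otimes n}\to A^{\otimes m}$. Complementary endomorphism: $H:A\to A$ with $(H\otimes 1_A)\circ\eta_A=(1_A\otimes H)\circ\eta_A$, $H^\dagger=H$, $H$ unitary, and $\Xi_2^1\circ(H\otimes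 H)\circ\Xi_1^2=\Xi_0^1\circ\Xi_1^0$. *)

theory Defs
  imports Main
begin

text \<open>Every element of the morphism type is a morphism; composition,
  tensor etc. are total functions, and the axioms only constrain composable data.\<close>

record ('o, 'm) sd_cat =
  cdom  :: "'m \<Rightarrow> 'o"
  ccod  :: "'m \<Rightarrow> 'o"
  ccomp :: "'m \<Rightarrow> 'm \<Rightarrow> 'm"      (* ccomp g f = g \<circ> f *)
  cid   :: "'o \<Rightarrow> 'm"
  ctob  :: "'o \<Rightarrow> 'o \<Rightarrow> 'o"
  ctm   :: "'m \<Rightarrow> 'm \<Rightarrow> 'm"
  cunit :: "'o"
  csym  :: "'o \<Rightarrow> 'o \<Rightarrow> 'm"     (* sigma_{A,B} : A \<otimes> B \<rightarrow> B \<otimes> A *)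
  cdag  :: "'m \<Rightarrow> 'm"
  ceta  :: "'o \<Rightarrow> 'm"           (* eta_A : I \<rightarrow> A \<otimes> A *)

locale sd_dagger_smc =
  fixes C :: "('o, 'm) sd_cat"
  assumes dom_id: "cdom C (cid C A) = A"
    and cod_id: "ccod C (cid C A) = A"
    and dom_comp: "cdom C g = ccod C f \<Longrightarrow> cdom C (ccomp C g f) = cdom C f"
    and cod_comp: "cdom C g = ccod C f \<Longrightarrow> ccod C (ccomp C g f) = ccod C g"
    and comp_assoc: "cdom C h = ccod C g \<Longrightarrow> cdom C g = ccod C f \<Longrightarrow>
        ccomp C (ccomp C h g) f = ccomp C h (ccomp C g f)"
    and comp_id_right: "ccomp C f (cid C (cdom C f)) = f"
    and comp_id_left: "ccomp C (cid C (ccod C f)) f = f"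
    and dom_tm: "cdom C (ctm C f g) = ctob C (cdom C f) (cdom C g)"
    and cod_tm: "ccod C (ctm C f g) = ctob C (ccod C f) (ccod C g)"
    and tm_id: "ctm C (cid C A) (cid C B) = cid C (ctob C A B)"
    and interchange: "cdom C g = ccod C f \<Longrightarrow> cdom C g' = ccod C f' \<Longrightarrow>
        ctm C (ccomp C g f) (ccomp C g' f') = ccomp C (ctm C g g') (ctm C f f')"
    and tob_assoc: "ctob C (ctob C A B) D = ctob C A (ctob C B D)"
    and tob_unit_left: "ctob C (cunit C) A = A"
    and tob_unit_right: "ctob C A (cunit C) = A"
    and tm_assoc: "ctm C (ctm C f g) h = ctm C f (ctm C g h)"
    and tm_unit_left: "ctm C (cid C (cunit C)) f = f"
    and tm_unit_right: "ctm C f (cid C (cunit C)) = f"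
    and dom_sym: "cdom C (csym C A B) = ctob C A B"
    and cod_sym: "ccod C (csym C A B) = ctob C B A"
    and sym_natural: "ccomp C (csym C (ccod C f) (ccod C g)) (ctm C f g)
        = ccomp C (ctm C g f) (csym C (cdom C f) (cdom C g))"
    and sym_inverse: "ccomp C (csym C B A) (csym C A B) = cid C (ctob C A B)"
    and sym_hexagon: "csym C A (ctob C B D)
        = ccomp C (ctm C (cid C B) (csym C A D)) (ctm C (csym C A B) (cid C D))"
    and dom_dag: "cdom C (cdag C f) = ccod C f"
    and cod_dag: "ccod C (cdag C f) = cdom C f"
    and dag_comp: "cdom C g = ccod C f \<Longrightarrow> cdag C (ccomp C g f) = ccomp C (cdag C f) (cdag C g)"
    and dag_dag: "cdag C (cdag C f) = f"
    and dag_id: "cdag C (cid C A) = cid C A"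
    and dag_tm: "cdag C (ctm C f g) = ctm C (cdag C f) (cdag C g)"
    and dag_sym: "cdag C (csym C A B) = csym C B A"
    and dom_eta: "cdom C (ceta C A) = cunit C"
    and cod_eta: "ccod C (ceta C A) = ctob C A A"
    and snake: "ccomp C (ctm C (cdag C (ceta C A)) (cid C A)) (ctm C (cid C A) (ceta C A)) = cid C A"
    and sym_eta: "ccomp C (csym C A A) (ceta C A) = ceta C A"

fun spider :: "('o, 'm) sd_cat \<Rightarrow> 'o \<Rightarrow> 'm \<Rightarrow> 'm \<Rightarrow> nat \<Rightarrow> 'm" where
  "spider C A mu u 0 = u"
| "spider C A mu u (Suc 0) = cid C A"
| "spider C A mu u (Suc (Suc k)) = ccomp C mu (ctm C (spider C A mu u (Suc k)) (cid C A))"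

definition Xi :: "('o, 'm) sd_cat \<Rightarrow> 'o \<Rightarrow> 'm \<Rightarrow> 'm \<Rightarrow> nat \<Rightarrow> nat \<Rightarrow> 'm" where
  "Xi C A mu u n m = ccomp C (cdag C (spider C A mu u m)) (spider C A mu u n)"

definition classical_structure :: "('o, 'm) sd_cat \<Rightarrow> 'o \<Rightarrow> 'm \<Rightarrow> 'm \<Rightarrow> bool" where
  "classical_structure C A mu u \<longleftrightarrow>
     cdom C mu = ctob C A A \<and> ccod C mu = A \<and> cdom C u = cunit C \<and> ccod C u = A \<and>
     ccomp C mu (ctm C mu (cid C A)) = ccomp C mu (ctm C (cid C A) mu) \<and>
     ccomp C mu (ctm C u (cid C A)) = cid C A \<and>
     ccomp C mu (ctm C (cid C A) u) = cid C A \<and>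
     ccomp C mu (csym C A A) = mu \<and>
     ccomp C (ctm C (cid C A) mu) (ctm C (cdag C mu) (cid C A)) = ccomp C (cdag C mu) mu \<and>
     ccomp C mu (cdag C mu) = cid C A \<and>
     ceta C A = ccomp C (cdag C mu) u"

definition complementary :: "('o, 'm) sd_cat \<Rightarrow> 'o \<Rightarrow> 'm \<Rightarrow> 'm \<Rightarrow> 'm \<Rightarrow> bool" where
  "complementary C A mu u H \<longleftrightarrow>
     cdom C H = A \<and> ccod C H = A \<and>
     ccomp C (ctm C H (cid C A)) (ceta C A) = ccomp C (ctm C (cid C A) H) (ceta C A) \<and>
     cdag C H = H \<and>
     ccomp C (cdag C H) H = cid C A \<and> ccomp C H (cdag C H) = cid C A \<and>
     ccomp C (Xi C A mu u 2 1) (ccomp C (ctm C H H) (Xi C A mu u 1 2))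
       = ccomp C (Xi C A mu u 0 1) (Xi C A mu u 1 0)"

end

theory Submission
  imports Defs
begin

context sd_dagger_smc
begin

lemma tmL: "cdom C g = ccod C f \<Longrightarrow>
  ctm C (ccomp C g f) h = ccomp C (ctm C g (cid C (ccod C h))) (ctm C f h)"
proof -
  assume a: "cdom C g = ccod C f"
  have "ctm C (ccomp C g f) h = ctm C (ccomp C g f) (ccomp C (cid C (ccod C h)) h)"
    by (simp add: comp_id_left)
  also have "\<dots> = ccomp C (ctm C g (cid C (ccod C h))) (ctm C f h)"
    using a by (simp add: interchange dom_id)
  finally show ?thesis .
qed

lemma tmR: "cdom C g = ccod C f \<Longrightarrow>
  ctm C h (ccomp C g f) = ccomp C (ctm C (cid C (ccod C h)) g) (ctm C h f)"
proof -
  assume a: "cdom C g = ccod C f"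
  have "ctm C h (ccomp C g f) = ctm C (ccomp C (cid C (ccod C h)) h) (ccomp C g f)"
    by (simp add: comp_id_left)
  also have "\<dots> = ccomp C (ctm C (cid C (ccod C h)) g) (ctm C h f)"
    using a by (simp add: interchange dom_id)
  finally show ?thesis .
qed

lemmas dc = dom_tm cod_tm dom_id cod_id dom_dag cod_dag tob_unit_left tob_unit_right tob_assoc
  dom_comp cod_comp

lemma main:
  assumes cs: "classical_structure C A mu u"
    and cp: "complementary C A mu u H"
  shows "ccomp C (ctm C (Xi C A mu u 3 1) (cid C A))
           (ccomp C (ctm C (cid C A) (ctm C H (ctm C H (cid C A))))
                    (ctm C (cid C A) (Xi C A mu u 1 3)))
         = cid C (ctob C A A)"
proof -
  let ?i = "cid C A"
  let ?d = "cdag C mu"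
  let ?e = "cdag C u"
  note c = cs[unfolded classical_structure_def]
  note h = cp[unfolded complementary_def]
  have mdom: "cdom C mu = ctob C A A" and mcod: "ccod C mu = A" and udom: "cdom C u = cunit C"
    and ucod: "ccod C u = A" and Hdom: "cdom C H = A" and Hcod: "ccod C H = A"
    using c h by auto
  note D = dc mdom mcod udom ucod Hdom Hcod
  have sp2: "spider C A mu u 2 = mu"
  proof -
    have "spider C A mu u (Suc (Suc 0)) = ccomp C mu (ctm C ?i ?i)" by (simp only: spider.simps)
    also have "\<dots> = ccomp C mu (cid C (cdom C mu))" by (simp only: tm_id mdom)
    also have "\<dots> = mu" by (rule comp_id_right)
    finally show ?thesis by (simp only: numeral_2_eq_2)
  qed
  have sp3: "spider C A mu u 3 = ccomp C mu (ctm C mu ?i)"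
  proof -
    have "spider C A mu u (Suc (Suc (Suc 0))) = ccomp C mu (ctm C (spider C A mu u (Suc (Suc 0))) ?i)"
      by (simp only: spider.simps)
    then show ?thesis using sp2 by (simp only: numeral_2_eq_2 numeral_3_eq_3)
  qed
  have X31: "Xi C A mu u 3 1 = ccomp C mu (ctm C ?i mu)"
  proof -
    have "Xi C A mu u 3 1 = ccomp C ?i (ccomp C mu (ctm C mu ?i))"
      by (simp add: Xi_def sp3 dag_id)
    also have "\<dots> = ccomp C mu (ctm C mu ?i)"
      using comp_id_left[of "ccomp C mu (ctm C mu ?i)"] by (simp add: D)
    finally show ?thesis using c by simp
  qed
  have X13: "Xi C A mu u 1 3 = ccomp C (ctm C ?d ?i) ?d"
  proof -
    have "Xi C A mu u 1 3 = ccomp C (ccomp C (ctm C ?d ?i) ?d) ?i"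
      by (simp add: Xi_def sp3 dag_comp dag_tm dag_id D)
    also have "\<dots> = ccomp C (ctm C ?d ?i) ?d"
      using comp_id_right[of "ccomp C (ctm C ?d ?i) ?d"] by (simp add: D)
    finally show ?thesis .
  qed
  have X21: "Xi C A mu u 2 1 = mu"
    using comp_id_left[of mu] by (simp add: Xi_def sp2 dag_id D)
  have X12: "Xi C A mu u 1 2 = ?d"
    using comp_id_right[of ?d] by (simp add: Xi_def sp2 D)
  have X01: "Xi C A mu u 0 1 = u"
    using comp_id_left[of u] by (simp add: Xi_def dag_id D)
  have X10: "Xi C A mu u 1 0 = ?e"
    using comp_id_right[of ?e] by (simp add: Xi_def D)
  have comp: "ccomp C mu (ccomp C (ctm C H H) ?d) = ccomp C u ?e"
    using h X21 X12 X01 X10 by simp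
  have un1: "ccomp C mu (ctm C ?i u) = ?i" and un2: "ccomp C mu (ctm C u ?i) = ?i"
    and ass: "ccomp C mu (ctm C mu ?i) = ccomp C mu (ctm C ?i mu)" using c by auto
  have S1: "ctm C (ccomp C mu (ctm C ?i mu)) ?i = ccomp C (ctm C mu ?i) (ctm C ?i (ctm C mu ?i))"
    by (simp add: tmL D tm_assoc)
  have S2: "ctm C ?i (ccomp C (ctm C ?d ?i) ?d) = ccomp C (ctm C ?i (ctm C ?d ?i)) (ctm C ?i ?d)"
    by (simp add: tmR D)
  have M: "ccomp C (ctm C ?i (ctm C mu ?i)) (ccomp C (ctm C ?i (ctm C H (ctm C H ?i))) (ctm C ?i (ctm C ?d ?i)))
     = ccomp C (ctm C ?i (ctm C u ?i)) (ctm C ?i (ctm C ?e ?i))"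
  proof -
    have "ctm C ?i (ctm C (ccomp C mu (ccomp C (ctm C H H) ?d)) ?i)
       = ccomp C (ctm C ?i (ctm C mu ?i)) (ccomp C (ctm C ?i (ctm C H (ctm C H ?i))) (ctm C ?i (ctm C ?d ?i)))"
      by (simp add: tmL tmR D tm_assoc)
    moreover have "ctm C ?i (ctm C (ccomp C u ?e) ?i) = ccomp C (ctm C ?i (ctm C u ?i)) (ctm C ?i (ctm C ?e ?i))"
      by (simp add: tmL tmR D)
    ultimately show ?thesis using comp by simp
  qed
  have P1: "ccomp C (ctm C mu ?i) (ctm C ?i (ctm C u ?i)) = cid C (ctob C A A)"
  proof -
    have "ctm C (ccomp C mu (ctm C ?i u)) ?i = ccomp C (ctm C mu ?i) (ctm C ?i (ctm C u ?i))"
      by (simp add: tmL D tm_assoc)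
    then show ?thesis using un1 by (simp add: tm_id)
  qed
  have P2: "ccomp C (ctm C ?i (ctm C ?e ?i)) (ctm C ?i ?d) = cid C (ctob C A A)"
  proof -
    have "ccomp C (ctm C ?e ?i) ?d = ?i"
      using arg_cong[OF un2, of "cdag C"] by (simp add: dag_comp dag_tm dag_id D)
    moreover have "ctm C ?i (ccomp C (ctm C ?e ?i) ?d) = ccomp C (ctm C ?i (ctm C ?e ?i)) (ctm C ?i ?d)"
      by (simp add: tmR D)
    ultimately show ?thesis by (simp add: tm_id)
  qed
  have "ccomp C (ctm C (Xi C A mu u 3 1) (cid C A))
           (ccomp C (ctm C (cid C A) (ctm C H (ctm C H (cid C A))))
                    (ctm C (cid C A) (Xi C A mu u 1 3)))
     = ccomp C (ccomp C (ctm C mu ?i) (ctm C ?i (ctm C mu ?i)))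
        (ccomp C (ctm C ?i (ctm C H (ctm C H ?i))) (ccomp C (ctm C ?i (ctm C ?d ?i)) (ctm C ?i ?d)))"
    by (simp only: X31 X13 S1 S2)
  also have "\<dots> = ccomp C (ctm C mu ?i) (ccomp C (ccomp C (ctm C ?i (ctm C mu ?i))
        (ccomp C (ctm C ?i (ctm C H (ctm C H ?i))) (ctm C ?i (ctm C ?d ?i)))) (ctm C ?i ?d))"
    by (simp add: comp_assoc D)
  also have "\<dots> = ccomp C (ctm C mu ?i) (ccomp C (ccomp C (ctm C ?i (ctm C u ?i)) (ctm C ?i (ctm C ?e ?i))) (ctm C ?i ?d))"
    by (simp only: M)
  also have "\<dots> = ccomp C (ccomp C (ctm C mu ?i) (ctm C ?i (ctm C u ?i))) (ccomp C (ctm C ?i (ctm C ?e ?i)) (ctm C ?i ?d))"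
    by (simp add: comp_assoc D)
  also have "\<dots> = cid C (ctob C A A)"
    using comp_id_left[of "cid C (ctob C A A)"] by (simp only: P1 P2 cod_id)
  finally show ?thesis .
qed

end

theorem mainTheorem3:
  fixes C :: "('o, 'm) sd_cat" and A :: 'o and mu u H :: 'm
  assumes "sd_dagger_smc C"
    and "classical_structure C A mu u"
    and "complementary C A mu u H"
  shows "ccomp C (ctm C (Xi C A mu u 3 1) (cid C A))
           (ccomp C (ctm C (cid C A) (ctm C H (ctm C H (cid C A))))
                    (ctm C (cid C A) (Xi C A mu u 1 3)))
         = cid C (ctob C A A)"
  using sd_dagger_smc.main[OF assms] .

end
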